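(* Let $(w_t)_{t\in\mathbb{N}_0}$ be mutually independent $\mathbb{R}^d$-valued random vectors with $\mathsf{E}[w_t]=0$, $\mathsf{E}[w_tw_t^{\mathrm T}]=Q_t$, and $\mathsf{E}[\|w_t\|^4]\le C_4$ for all $t$, for some $C_4>0$. Let $C_1:=\sup_t\mathsf{E}[\|w_t\|]$. Fix $r>C_1$ and $x\in\mathbb{R}^d$, and consider the closed-loop random walk $$x_{t+1}=x_t-\operatorname{sat}_r(x_t)+w_t,\qquad x_0=x,$$ with natural filtration $(\mathfrak{F}_t)_{t\in\mathbb{N}_0}$, and set $\xi_t:=\|x_t\|$. Then there exist constants $b>0$ and $J<\infty$ such that for all $t$, $$\mathsf{E}[\xi_{t+1}-\xi_t\mid\mathfrak{F}_t]\le -b\quad\text{on the event }\{\xi_t>J\}.$$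
   Context: For $r>0$, $\operatorname{sat}_r:\mathbb{R}^d\to\{y:\|y\|\le r\}$ is defined by $\operatorname{sat}_r(y)=y$ if $\|y\|\le r$ and $\operatorname{sat}_r(y)=ry/\|y\|$ otherwise (radial, not componentwise, saturation). $\|\cdot\|$ is the Euclidean norm. *)

theory Defs
  imports "HOL-Probability.Probability"
begin

definition sat :: "real \<Rightarrow> 'v::real_normed_vector \<Rightarrow> 'v" where
  "sat r y = (if norm y \<le> r then y else (r / norm y) *\<^sub>R y)"

fun cl_walk :: "real \<Rightarrow> 'v::real_normed_vector \<Rightarrow> (nat \<Rightarrow> 'v) \<Rightarrow> nat \<Rightarrow> 'v" where
  "cl_walk r x ws 0 = x"
| "cl_walk r x ws (Suc t) = cl_walk r x ws t - sat r (cl_walk r x ws t) + ws t"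

definition nat_filtration ::
  "'a measure \<Rightarrow> (nat \<Rightarrow> 'a \<Rightarrow> 'b::topological_space) \<Rightarrow> nat \<Rightarrow> 'a measure" where
  "nat_filtration M X t =
     sigma (space M) {X s -` A \<inter> space M | s A. s \<le> t \<and> A \<in> sets borel}"

end

theory Submission imports Defs begin


lemma norm_sat_le: "norm (sat r (y::'v::real_normed_vector)) \<le> \<bar>r\<bar>"
  unfolding sat_def by (auto simp: abs_mult)

lemma norm_sub_sat:
  assumes "norm (y::'v::real_normed_vector) > r" "r \<ge> 0"
  shows "norm (y - sat r y) = norm y - r"
proof -
  have ny: "norm y > 0" using assms by auto
  have "y - sat r y = (1 - r / norm y) *\<^sub>R y" using assms unfolding sat_def by (simp add: algebra_simps)
  moreover have "1 - r / norm y \<ge> 0" using assms ny by (simp add: field_simps)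
  ultimately have "norm (y - sat r y) = (1 - r / norm y) * norm y" by simp
  also have "\<dots> = norm y - r" using ny by (simp add: field_simps)
  finally show ?thesis .
qed

lemma measurable_sat[measurable]:
  fixes f :: "'a \<Rightarrow> 'v::euclidean_space"
  assumes [measurable]: "f \<in> borel_measurable M"
  shows "(\<lambda>\<omega>. sat r (f \<omega>)) \<in> borel_measurable M"
  unfolding sat_def by measurable

lemma cl_walk_cong: "(\<And>i. i < s \<Longrightarrow> ws i = ws' i) \<Longrightarrow> cl_walk r x ws s = cl_walk r x ws' s"
  by (induction s) auto

lemma cl_walk_meas_omega[measurable]:
  fixes w :: "nat \<Rightarrow> 'a \<Rightarrow> 'v::euclidean_space"
  assumes "\<And>t. w t \<in> borel_measurable M"
  shows "(\<lambda>\<omega>. cl_walk r x (\<lambda>s. w s \<omega>) t) \<in> borel_measurable M"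
proof (induction t)
  case 0 then show ?case by simp
next
  case (Suc t)
  note [measurable] = Suc assms
  show ?case by simp measurable
qed

lemma cl_walk_meas_pi:
  "s \<le> t \<Longrightarrow> (\<lambda>f. cl_walk r (x::'v::euclidean_space) f s) \<in> borel_measurable (PiM {..<t} (\<lambda>_. borel))"
proof (induction s)
  case 0 then show ?case by simp
next
  case (Suc s)
  then have [measurable]: "(\<lambda>f. cl_walk r x f s) \<in> borel_measurable (PiM {..<t} (\<lambda>_. borel))" by simp
  have [measurable]: "(\<lambda>f. f s) \<in> measurable (PiM {..<t} (\<lambda>_. borel)) (borel :: 'v measure)"
    using Suc by (intro measurable_component_singleton) auto
  show ?case by simp measurable
qed


lemma ind_pre:
  assumes "A \<subseteq> S"
  shows "indicator A -` (B::real set) \<inter> S \<in> {{}, A, S - A, S}"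
proof -
  have e: "indicator A -` B \<inter> S = (if 1 \<in> B then A else {}) \<union> (if 0 \<in> B then S - A else {})"
  proof (intro set_eqI)
    fix x
    show "x \<in> indicator A -` B \<inter> S \<longleftrightarrow> x \<in> (if 1 \<in> B then A else {}) \<union> (if 0 \<in> B then S - A else {})"
      using assms by (cases "x \<in> A") auto
  qed
  show ?thesis unfolding e using assms by auto
qed


lemma (in prob_space) indep_condexp_const:
  fixes w :: "nat \<Rightarrow> 'a \<Rightarrow> 'v::euclidean_space" and h :: "'v \<Rightarrow> real"
  assumes ind: "indep_vars (\<lambda>_. borel) w UNIV"
    and F: "subalgebra M F"
    and FY: "sets F \<subseteq> sigma_sets (space M)
       {(\<lambda>\<omega>. restrict (\<lambda>i. w i \<omega>) {..<t}) -` B \<inter> space M | B. B \<in> sets (PiM {..<t} (\<lambda>_. borel))}"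
    and h[measurable]: "h \<in> borel_measurable borel"
    and hi: "integrable M (\<lambda>\<omega>. h (w t \<omega>))"
  shows "AE \<omega> in M. real_cond_exp M F (\<lambda>\<omega>. h (w t \<omega>)) \<omega> = (\<integral>\<omega>. h (w t \<omega>) \<partial>M)"
proof -
  interpret finite_measure_subalgebra M F
    by unfold_locales (rule F)
  have wm[measurable]: "\<And>i. w i \<in> borel_measurable M"
    using ind unfolding indep_vars_def2 by auto
  let ?Y = "\<lambda>\<omega>. restrict (\<lambda>i. w i \<omega>) {..<t}"
  let ?Z = "\<lambda>\<omega>. restrict (\<lambda>i. w i \<omega>) {t}"
  let ?SY = "sigma_sets (space M) {?Y -` B \<inter> space M | B. B \<in> sets (PiM {..<t} (\<lambda>_. borel))}"
  let ?SZ = "sigma_sets (space M) {?Z -` B \<inter> space M | B. B \<in> sets (PiM {t} (\<lambda>_. borel::'v measure))}"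
  have "indep_var (PiM {..<t} (\<lambda>_. borel)) ?Y (PiM {t} (\<lambda>_. borel)) ?Z"
    by (rule indep_var_restrict[OF ind]) auto
  then have iYZ: "indep_set ?SY ?SZ" unfolding indep_var_eq by blast
  let ?c = "\<integral>\<omega>. h (w t \<omega>) \<partial>M"
  show ?thesis
  proof (rule real_cond_exp_charact)
    fix A assume AF: "A \<in> sets F"
    then have AM[measurable]: "A \<in> sets M" using F by (meson subalgebra_def subsetD)
    have fin: "emeasure M A < \<top>" using prob_space.emeasure_le_1[OF prob_space_axioms, of A]
      by (metis ennreal_one_less_top order.strict_trans1)
    have AY: "A \<in> ?SY" using AF FY by blast
    have s1: "sigma_sets (space M) {indicator A -` B \<inter> space M | B. B \<in> sets (borel::real measure)} \<subseteq> ?SY"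
    proof (rule sigma_sets_mono, safe)
      fix B :: "real set"
      have Asp: "A \<subseteq> space M" using AM sets.sets_into_space by blast
      have "indicator A -` B \<inter> space M \<in> {{}, A, space M - A, space M}"
        using Asp by (rule ind_pre)
      then have d: "indicator A -` B \<inter> space M = {} \<or> indicator A -` B \<inter> space M = A \<or>
          indicator A -` B \<inter> space M = space M - A \<or> indicator A -` B \<inter> space M = space M" by simp
      have c1: "space M - A \<in> ?SY" using AY by (rule sigma_sets.Compl)
      have c2: "space M \<in> ?SY" by (rule sigma_sets_top)
      have c3: "{} \<in> ?SY" by (rule sigma_sets.Empty)
      from d show "indicator A -` B \<inter> space M \<in> ?SY"
      proof (elim disjE)
      qed (simp_all only: c1 c2 c3 AY)
    qed
    have s2: "sigma_sets (space M) {(\<lambda>\<omega>. h (w t \<omega>)) -` B \<inter> space M | B. B \<in> sets (borel::real measure)} \<subseteq> ?SZ"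
    proof (rule sigma_sets_mono, safe)
      fix B :: "real set" assume B: "B \<in> sets borel"
      have hm: "(\<lambda>f. h (f t)) \<in> borel_measurable (PiM {t} (\<lambda>_. borel::'v measure))"
      proof -
        have comp: "(\<lambda>f. f t) \<in> measurable (PiM {t} (\<lambda>_. borel::'v measure)) borel"
          by (rule measurable_component_singleton) simp
        show ?thesis by (rule measurable_compose[OF comp h])
      qed
      have Zm: "?Z \<in> measurable M (PiM {t} (\<lambda>_. borel))"
        by (intro measurable_restrict) auto
      have eq: "(\<lambda>\<omega>. h (w t \<omega>)) -` B \<inter> space M = ?Z -` ((\<lambda>f. h (f t)) -` B \<inter> space (PiM {t} (\<lambda>_. borel))) \<inter> space M"
        using measurable_space[OF Zm] by auto
      have mem: "(\<lambda>f. h (f t)) -` B \<inter> space (PiM {t} (\<lambda>_. borel)) \<in> sets (PiM {t} (\<lambda>_. borel::'v measure))"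
        using hm B by (rule measurable_sets)
      show "(\<lambda>\<omega>. h (w t \<omega>)) -` B \<inter> space M \<in> ?SZ" unfolding eq
        by (rule sigma_sets.Basic) (use mem in blast)
    qed
    have "indep_var borel (indicator A) borel (\<lambda>\<omega>. h (w t \<omega>))"
      unfolding indep_var_eq
    proof
      show "random_variable borel (indicator A :: 'a \<Rightarrow> real) \<and> random_variable borel (\<lambda>\<omega>. h (w t \<omega>))"
        by simp
      show "indep_set (sigma_sets (space M) {indicator A -` B \<inter> space M | B. B \<in> sets (borel::real measure)})
          (sigma_sets (space M) {(\<lambda>\<omega>. h (w t \<omega>)) -` B \<inter> space M | B. B \<in> sets (borel::real measure)})"
        using iYZ s1 s2 unfolding indep_sets2_eq by (meson subsetD subset_trans)
    qed
    then have "(\<integral>\<omega>. indicator A \<omega> * h (w t \<omega>) \<partial>M) = (\<integral>\<omega>. indicator A \<omega> \<partial>M) * ?c"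
      by (rule indep_var_lebesgue_integral) (auto simp: hi AM fin intro!: integrable_real_indicator)
    then show "(\<integral>\<omega>\<in>A. h (w t \<omega>) \<partial>M) = (\<integral>\<omega>\<in>A. ?c \<partial>M)"
      using AM by (simp add: set_lebesgue_integral_def sets.Int_space_eq2 mult.commute)
  qed (auto simp: hi)
qed



theorem lemma2:
  fixes M :: "'a measure"
    and w :: "nat \<Rightarrow> 'a \<Rightarrow> 'v::euclidean_space"
    and Q :: "nat \<Rightarrow> 'v \<Rightarrow> 'v \<Rightarrow> real"
    and C4 r :: real
    and x :: 'v
  assumes "prob_space M"
    and "prob_space.indep_vars M (\<lambda>_. borel) w UNIV"
    and "\<And>t. integrable M (w t)"
    and "\<And>t. (\<integral>\<omega>. w t \<omega> \<partial>M) = 0"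
    and "\<And>t i j. i \<in> Basis \<Longrightarrow> j \<in> Basis \<Longrightarrow>
           integrable M (\<lambda>\<omega>. (w t \<omega> \<bullet> i) * (w t \<omega> \<bullet> j)) \<and>
           (\<integral>\<omega>. (w t \<omega> \<bullet> i) * (w t \<omega> \<bullet> j) \<partial>M) = Q t i j"
    and "C4 > 0"
    and "\<And>t. integrable M (\<lambda>\<omega>. norm (w t \<omega>) ^ 4)"
    and "\<And>t. (\<integral>\<omega>. norm (w t \<omega>) ^ 4 \<partial>M) \<le> C4"
    and "r > (SUP t. \<integral>\<omega>. norm (w t \<omega>) \<partial>M)"
  shows "\<exists>b>0. \<exists>J::real. \<forall>t.
           AE \<omega> in M. norm (cl_walk r x (\<lambda>s. w s \<omega>) t) > J \<longrightarrow>
             real_cond_exp M (nat_filtration M (\<lambda>s \<omega>. cl_walk r x (\<lambda>s. w s \<omega>) s) t)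
               (\<lambda>\<omega>. norm (cl_walk r x (\<lambda>s. w s \<omega>) (Suc t)) - norm (cl_walk r x (\<lambda>s. w s \<omega>) t)) \<omega>
             \<le> - b"
proof -
  interpret P: prob_space M by fact
  note ind = assms(2)
  have wm[measurable]: "\<And>i. w i \<in> borel_measurable M"
    using ind unfolding P.indep_vars_def2 by auto
  have int_nw: "\<And>t. integrable M (\<lambda>\<omega>. norm (w t \<omega>))"
    using assms(3) integrable_norm by blast
  have c_bound: "(\<integral>\<omega>. norm (w t \<omega>) \<partial>M) \<le> 1 + C4" for t
  proof -
    have pt: "norm v \<le> 1 + norm v ^ 4" for v :: 'v
    proof (cases "norm v \<le> 1")
      case False
      then have "norm v ^ 1 \<le> norm v ^ 4" by (intro power_increasing) auto
      then show ?thesis by simp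
    next
      case True
      have "0 \<le> norm v ^ 4" by simp
      then show ?thesis using True by linarith
    qed
    have "(\<integral>\<omega>. norm (w t \<omega>) \<partial>M) \<le> (\<integral>\<omega>. 1 + norm (w t \<omega>) ^ 4 \<partial>M)"
      by (rule integral_mono) (auto intro: int_nw assms(7) pt)
    also have "\<dots> = 1 + (\<integral>\<omega>. norm (w t \<omega>) ^ 4 \<partial>M)"
      using assms(7)[of t] by (simp add: P.prob_space)
    also have "\<dots> \<le> 1 + C4" using assms(8)[of t] by simp
    finally show ?thesis .
  qed
  define C1 where "C1 = (SUP t. \<integral>\<omega>. norm (w t \<omega>) \<partial>M)"
  have bdd: "bdd_above (range (\<lambda>t. \<integral>\<omega>. norm (w t \<omega>) \<partial>M))"
    by (intro bdd_aboveI2) (rule c_bound)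
  have cle: "(\<integral>\<omega>. norm (w t \<omega>) \<partial>M) \<le> C1" for t
    unfolding C1_def by (rule cSUP_upper[OF UNIV_I bdd])
  have rC1: "r > C1" using assms(9) unfolding C1_def .
  have C1nn: "C1 \<ge> 0"
  proof -
    have "0 \<le> (\<integral>\<omega>. norm (w 0 \<omega>) \<partial>M)" by (rule integral_nonneg_AE) simp
    then show ?thesis using cle[of 0] by linarith
  qed
  have r0: "r \<ge> 0" using rC1 C1nn by simp
  show ?thesis
  proof (rule exI[of _ "r - C1"], intro conjI exI[of _ r] allI)
    show "r - C1 > 0" using rC1 by simp
    fix t
    define X where "X = (\<lambda>s \<omega>. cl_walk r x (\<lambda>s. w s \<omega>) s)"
    have Xm[measurable]: "X s \<in> borel_measurable M" for s
      unfolding X_def by (rule cl_walk_meas_omega) (rule wm)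
    have Xint: "integrable M (X s)" for s
    proof (induction s)
      case 0 then show ?case by (simp add: X_def)
    next
      case (Suc s)
      have si: "integrable M (\<lambda>\<omega>. sat r (X s \<omega>))"
        by (rule P.integrable_const_bound[where B="\<bar>r\<bar>"]) (auto simp: norm_sat_le)
      have "X (Suc s) = (\<lambda>\<omega>. X s \<omega> - sat r (X s \<omega>) + w s \<omega>)"
        by (simp add: X_def)
      then show ?case using Suc si assms(3)[of s] by simp
    qed
    have Xnint: "integrable M (\<lambda>\<omega>. norm (X s \<omega>))" for s
      using Xint integrable_norm by blast
    define G where "G = {X s -` A \<inter> space M | s A. s \<le> t \<and> A \<in> sets (borel :: 'v measure)}"
    define F where "F = nat_filtration M X t"
    have Gsub: "G \<subseteq> Pow (space M)" unfolding G_def by auto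
    have GM: "G \<subseteq> sets M" unfolding G_def by auto
    have sF: "sets F = sigma_sets (space M) G"
      unfolding F_def nat_filtration_def G_def[symmetric] using Gsub by (rule sets_measure_of)
    have spF: "space F = space M"
      unfolding F_def nat_filtration_def G_def[symmetric] using Gsub by (rule space_measure_of)
    have subalg: "subalgebra M F"
      unfolding subalgebra_def using sF spF sets.sigma_sets_subset[OF GM] by auto
    let ?Y = "\<lambda>\<omega>. restrict (\<lambda>i. w i \<omega>) {..<t}"
    have Ym: "?Y \<in> measurable M (PiM {..<t} (\<lambda>_. borel))"
      by (intro measurable_restrict) auto
    have FY: "sets F \<subseteq> sigma_sets (space M)
       {?Y -` B \<inter> space M | B. B \<in> sets (PiM {..<t} (\<lambda>_. borel))}"
      unfolding sF
    proof (rule sigma_sets_mono, rule subsetI)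
      fix S assume "S \<in> G"
      then obtain s A where S: "S = X s -` A \<inter> space M" and st: "s \<le> t" and A: "A \<in> sets borel"
        unfolding G_def by blast
      let ?B = "(\<lambda>f. cl_walk r x f s) -` A \<inter> space (PiM {..<t} (\<lambda>_. borel::'v measure))"
      have B: "?B \<in> sets (PiM {..<t} (\<lambda>_. borel))"
        by (rule measurable_sets[OF cl_walk_meas_pi[OF st] A])
      have eq: "S = ?Y -` ?B \<inter> space M"
      proof (intro set_eqI iffI)
        fix \<omega>
        have cw: "X s \<omega> = cl_walk r x (?Y \<omega>) s"
          unfolding X_def using st by (intro cl_walk_cong) auto
        { assume "\<omega> \<in> S" then show "\<omega> \<in> ?Y -` ?B \<inter> space M"
            using S cw measurable_space[OF Ym] by auto }
        { assume "\<omega> \<in> ?Y -` ?B \<inter> space M" then show "\<omega> \<in> S"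
            using S cw by auto }
      qed
      show "S \<in> sigma_sets (space M) {?Y -` B \<inter> space M | B. B \<in> sets (PiM {..<t} (\<lambda>_. borel))}"
        unfolding eq by (rule sigma_sets.Basic) (use B in blast)
    qed
    interpret S: finite_measure_subalgebra M F
      by unfold_locales (rule subalg)
    define E where "E = X t -` {v. r < norm v} \<inter> space M"
    have ob: "{v::'v. r < norm v} \<in> sets borel" by measurable
    have EG: "E \<in> G" unfolding E_def G_def using ob by blast
    have EF: "E \<in> sets F" using EG sF by (auto intro: sigma_sets.Basic)
    have EM[measurable]: "E \<in> sets M" using EG GM by auto
    have iEF: "indicator E \<in> borel_measurable F" using EF by (rule borel_measurable_indicator)
    define D where "D = (\<lambda>\<omega>. norm (X (Suc t) \<omega>) - norm (X t \<omega>))"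
    define g where "g = (\<lambda>\<omega>. norm (w t \<omega>) - r)"
    have Dint: "integrable M D" unfolding D_def using Xnint by auto
    have gint: "integrable M g" unfolding g_def using int_nw by auto
    have Dm[measurable]: "D \<in> borel_measurable M" using Dint by auto
    have gm[measurable]: "g \<in> borel_measurable M" using gint by auto
    have pt: "indicator E \<omega> * D \<omega> \<le> indicator E \<omega> * g \<omega>" for \<omega>
    proof (cases "\<omega> \<in> E")
      case True
      then have n: "norm (X t \<omega>) > r" unfolding E_def by auto
      have "norm (X (Suc t) \<omega>) = norm (X t \<omega> - sat r (X t \<omega>) + w t \<omega>)" by (simp add: X_def)
      also have "\<dots> \<le> norm (X t \<omega> - sat r (X t \<omega>)) + norm (w t \<omega>)" by (rule norm_triangle_ineq)
      also have "\<dots> = norm (X t \<omega>) - r + norm (w t \<omega>)" using norm_sub_sat[OF n r0] by simp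
      finally show ?thesis using True by (simp add: D_def g_def)
    qed simp
    have i1: "integrable M (\<lambda>\<omega>. indicator E \<omega> * D \<omega>)"
      using integrable_mult_indicator[OF EM Dint] by simp
    have i2: "integrable M (\<lambda>\<omega>. indicator E \<omega> * g \<omega>)"
      using integrable_mult_indicator[OF EM gint] by simp
    have e1: "AE \<omega> in M. real_cond_exp M F (\<lambda>\<omega>. indicator E \<omega> * D \<omega>) \<omega> = indicator E \<omega> * real_cond_exp M F D \<omega>"
      by (rule S.real_cond_exp_mult[OF iEF Dm]) (rule i1)
    have e2: "AE \<omega> in M. real_cond_exp M F (\<lambda>\<omega>. indicator E \<omega> * D \<omega>) \<omega> \<le> real_cond_exp M F (\<lambda>\<omega>. indicator E \<omega> * g \<omega>) \<omega>"
      by (rule S.real_cond_exp_mono[OF _ i1 i2]) (simp add: pt)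
    have e3: "AE \<omega> in M. real_cond_exp M F (\<lambda>\<omega>. indicator E \<omega> * g \<omega>) \<omega> = indicator E \<omega> * real_cond_exp M F g \<omega>"
      by (rule S.real_cond_exp_mult[OF iEF gm]) (rule i2)
    have e4: "AE \<omega> in M. real_cond_exp M F (\<lambda>\<omega>. norm (w t \<omega>) - r) \<omega> = (\<integral>\<omega>. norm (w t \<omega>) - r \<partial>M)"
      by (rule P.indep_condexp_const[OF ind subalg FY]) (auto simp: int_nw)
    have ig: "(\<integral>\<omega>. norm (w t \<omega>) - r \<partial>M) = (\<integral>\<omega>. norm (w t \<omega>) \<partial>M) - r"
      using int_nw[of t] by (simp add: P.prob_space)
    have "AE \<omega> in M. norm (X t \<omega>) > r \<longrightarrow> real_cond_exp M F D \<omega> \<le> - (r - C1)"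
      using AE_space e1 e2 e3 e4
    proof eventually_elim
      case (elim \<omega>)
      show ?case
      proof
        assume "norm (X t \<omega>) > r"
        then have "indicator E \<omega> = (1::real)" using elim unfolding E_def by simp
        then have "real_cond_exp M F D \<omega> \<le> real_cond_exp M F g \<omega>" using elim by simp
        also have "\<dots> = (\<integral>\<omega>. norm (w t \<omega>) \<partial>M) - r" using elim ig unfolding g_def by simp
        also have "\<dots> \<le> C1 - r" using cle[of t] by simp
        finally show "real_cond_exp M F D \<omega> \<le> - (r - C1)" by simp
      qed
    qed
    then show "AE \<omega> in M. norm (cl_walk r x (\<lambda>s. w s \<omega>) t) > r \<longrightarrow>
             real_cond_exp M (nat_filtration M (\<lambda>s \<omega>. cl_walk r x (\<lambda>s. w s \<omega>) s) t)
               (\<lambda>\<omega>. norm (cl_walk r x (\<lambda>s. w s \<omega>) (Suc t)) - norm (cl_walk r x (\<lambda>s. w s \<omega>) t)) \<omega>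
             \<le> - (r - C1)"
      unfolding F_def D_def X_def by simp
  qed
qed


end
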